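(* Let $D$ be a (smooth, generic) diagram of a knot in $\mathbb{R}^2$. For every double point of $D$ there exists an intersection parallelogram.
   Context: An intersection parallelogram for a knot diagram $D$ is a parallelogram $P$ with two horizontal sides such that: $P$ contains exactly one double point of $D$ and exactly two arcs of $D$ in its interior; one arc (the vertical arc) meets each of the two horizontal sides exactly once; the other arc (the horizontal arc) meets each of the other two parallel sides exactly once; and the arcs do not pass through the corners of $P$. *)

theory Defs
  imports "HOL-Analysis.Analysis"
begin

text \<open>The plane R^2 is identified with the complex numbers. A knot diagram is
  given by a 1-periodic smooth (C-infinity) closed curve.\<close>

definition smooth_curve :: "(real \<Rightarrow> complex) \<Rightarrow> bool" where
  "smooth_curve \<gamma> \<longleftrightarrow> (\<exists>f :: nat \<Rightarrow> real \<Rightarrow> complex. f 0 = \<gamma> \<and>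
      (\<forall>k t. (f k has_vector_derivative f (Suc k) t) (at t)))"

definition is_double_point :: "(real \<Rightarrow> complex) \<Rightarrow> complex \<Rightarrow> bool" where
  "is_double_point \<gamma> p \<longleftrightarrow> (\<exists>s t. 0 \<le> s \<and> s < 1 \<and> 0 \<le> t \<and> t < 1 \<and> s \<noteq> t \<and> \<gamma> s = p \<and> \<gamma> t = p)"

definition knot_diagram :: "(real \<Rightarrow> complex) \<Rightarrow> bool" where
  "knot_diagram \<gamma> \<longleftrightarrow>
     (\<forall>t. \<gamma> (t + 1) = \<gamma> t) \<and>
     smooth_curve \<gamma> \<and>
     (\<forall>t. vector_derivative \<gamma> (at t) \<noteq> 0) \<and>
     (\<forall>s t. 0 \<le> s \<and> s < 1 \<and> 0 \<le> t \<and> t < 1 \<and> s \<noteq> t \<and> \<gamma> s = \<gamma> t \<longrightarrow>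
        Im (cnj (vector_derivative \<gamma> (at s)) * vector_derivative \<gamma> (at t)) \<noteq> 0) \<and>
     (\<forall>r s t. 0 \<le> r \<and> r < 1 \<and> 0 \<le> s \<and> s < 1 \<and> 0 \<le> t \<and> t < 1 \<and>
        r \<noteq> s \<and> r \<noteq> t \<and> s \<noteq> t \<longrightarrow> \<not> (\<gamma> r = \<gamma> s \<and> \<gamma> s = \<gamma> t))"

definition par_pt :: "complex \<Rightarrow> real \<Rightarrow> complex \<Rightarrow> real \<Rightarrow> real \<Rightarrow> complex" where
  "par_pt c w v a b = c + of_real (a * w) + of_real b * v"

definition par_closed :: "complex \<Rightarrow> real \<Rightarrow> complex \<Rightarrow> complex set" where
  "par_closed c w v = {par_pt c w v a b | a b. 0 \<le> a \<and> a \<le> 1 \<and> 0 \<le> b \<and> b \<le> 1}"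

definition par_interior :: "complex \<Rightarrow> real \<Rightarrow> complex \<Rightarrow> complex set" where
  "par_interior c w v = {par_pt c w v a b | a b. 0 < a \<and> a < 1 \<and> 0 < b \<and> b < 1}"

definition par_bottom :: "complex \<Rightarrow> real \<Rightarrow> complex \<Rightarrow> complex set" where
  "par_bottom c w v = {par_pt c w v a 0 | a. 0 < a \<and> a < 1}"

definition par_top :: "complex \<Rightarrow> real \<Rightarrow> complex \<Rightarrow> complex set" where
  "par_top c w v = {par_pt c w v a 1 | a. 0 < a \<and> a < 1}"

definition par_left :: "complex \<Rightarrow> real \<Rightarrow> complex \<Rightarrow> complex set" where
  "par_left c w v = {par_pt c w v 0 b | b. 0 < b \<and> b < 1}"

definition par_right :: "complex \<Rightarrow> real \<Rightarrow> complex \<Rightarrow> complex set" where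
  "par_right c w v = {par_pt c w v 1 b | b. 0 < b \<and> b < 1}"

text \<open>Intersection parallelogram (sides given without corners, so endpoints of
  the arcs avoid the corners).\<close>

definition intersection_parallelogram ::
    "(real \<Rightarrow> complex) \<Rightarrow> complex \<Rightarrow> complex \<Rightarrow> real \<Rightarrow> complex \<Rightarrow> bool" where
  "intersection_parallelogram \<gamma> p c w v \<longleftrightarrow>
     w > 0 \<and> Im v > 0 \<and>
     {q \<in> par_closed c w v. is_double_point \<gamma> q} = {p} \<and>
     (\<exists>t1 u1 t2 u2. t1 < u1 \<and> u1 < t2 \<and> t2 < u2 \<and> u2 < t1 + 1 \<and>
        {t. \<gamma> t \<in> par_closed c w v} =
          (\<Union>k::int. {t1 + of_int k .. u1 + of_int k} \<union> {t2 + of_int k .. u2 + of_int k}) \<and>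
        \<gamma> ` {t1<..<u1} \<subseteq> par_interior c w v \<and>
        \<gamma> ` {t2<..<u2} \<subseteq> par_interior c w v \<and>
        ((\<gamma> t1 \<in> par_bottom c w v \<and> \<gamma> u1 \<in> par_top c w v) \<or>
         (\<gamma> t1 \<in> par_top c w v \<and> \<gamma> u1 \<in> par_bottom c w v)) \<and>
        ((\<gamma> t2 \<in> par_left c w v \<and> \<gamma> u2 \<in> par_right c w v) \<or>
         (\<gamma> t2 \<in> par_right c w v \<and> \<gamma> u2 \<in> par_left c w v)))"

end

theory Submission
  imports Defs
begin


lemma mono_lower:
  fixes F F' :: "real \<Rightarrow> real"
  assumes dF: "\<And>x. x \<in> {a..b} \<Longrightarrow> (F has_real_derivative F' x) (at x)"
    and m: "\<And>x. x \<in> {a..b} \<Longrightarrow> F' x \<ge> m"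
    and xy: "a \<le> x" "x \<le> y" "y \<le> b"
  shows "F y - F x \<ge> m * (y - x)"
proof -
  have "(\<lambda>z. F z - m * z) x \<le> (\<lambda>z. F z - m * z) y"
  proof (rule DERIV_nonneg_imp_nondecreasing[OF xy(2)])
    fix z assume z: "x \<le> z" "z \<le> y"
    show "\<exists>y. ((\<lambda>z. F z - m * z) has_real_derivative y) (at z) \<and> 0 \<le> y"
      apply (rule exI[of _ "F' z - m"])
      using dF[of z] m[of z] z xy by (auto intro!: derivative_eq_intros)
  qed
  then show ?thesis by (simp add: algebra_simps)
qed

lemma lip_bound:
  fixes G G' :: "real \<Rightarrow> real"
  assumes dG: "\<And>x. x \<in> {a..b} \<Longrightarrow> (G has_real_derivative G' x) (at x)"
    and k: "\<And>x. x \<in> {a..b} \<Longrightarrow> \<bar>G' x\<bar> \<le> k"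
    and xy: "a \<le> x" "x \<le> y" "y \<le> b"
  shows "\<bar>G y - G x\<bar> \<le> k * (y - x)"
proof -
  have 1: "G y - G x \<le> k * (y - x)"
    using mono_lower[of a b "\<lambda>z. - G z" "\<lambda>z. - G' z" "-k" x y] dG k xy
    by (force intro!: derivative_eq_intros)
  have 2: "G y - G x \<ge> (-k) * (y - x)"
    using mono_lower[of a b G G' "-k" x y] dG k xy by (force)
  show ?thesis using 1 2 by (simp add: abs_le_iff)
qed

lemma arc1d:
  fixes F F' :: "real \<Rightarrow> real"
  assumes dF: "\<And>x. x \<in> {xc-\<eta>..xc+\<eta>} \<Longrightarrow> (F has_real_derivative F' x) (at x)"
    and m: "\<And>x. x \<in> {xc-\<eta>..xc+\<eta>} \<Longrightarrow> F' x \<ge> m"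
    and mpos: "m > 0" and F0: "F xc = 0" and d: "0 < \<delta>" "\<delta> \<le> m * \<eta>"
  shows "\<exists>lo hi. xc-\<eta> \<le> lo \<and> lo < xc \<and> xc < hi \<and> hi \<le> xc+\<eta> \<and> F lo = -\<delta> \<and> F hi = \<delta> \<and>
     (\<forall>x\<in>{xc-\<eta>..xc+\<eta>}. \<bar>F x\<bar> \<le> \<delta> \<longleftrightarrow> lo \<le> x \<and> x \<le> hi) \<and>
     (\<forall>x\<in>{xc-\<eta>..xc+\<eta>}. \<bar>F x\<bar> < \<delta> \<longleftrightarrow> lo < x \<and> x < hi)"
proof -
  have eta: "\<eta> > 0" using d mpos by (smt (verit) mult_nonneg_nonpos)
  have ml: "F y - F x \<ge> m * (y - x)" if "xc-\<eta> \<le> x" "x \<le> y" "y \<le> xc+\<eta>" for x y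
    using mono_lower[OF dF m that] by auto
  have cont: "isCont F x" if "xc-\<eta> \<le> x" "x \<le> xc+\<eta>" for x
    using dF[of x] that DERIV_isCont by auto
  have "F (xc+\<eta>) \<ge> \<delta>" using ml[of xc "xc+\<eta>"] eta F0 d by auto
  then obtain hi where hi: "xc \<le> hi" "hi \<le> xc+\<eta>" "F hi = \<delta>"
    using IVT[of F xc \<delta> "xc+\<eta>"] F0 d eta cont by auto
  have "F (xc-\<eta>) \<le> -\<delta>" using ml[of "xc-\<eta>" xc] eta F0 d by auto
  then obtain lo where lo: "xc-\<eta> \<le> lo" "lo \<le> xc" "F lo = -\<delta>"
    using IVT[of F "xc-\<eta>" "-\<delta>" xc] F0 d eta cont by auto
  have lo2: "lo < xc" using lo F0 d by (cases "lo = xc") auto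
  have hi2: "xc < hi" using hi F0 d by (cases "hi = xc") auto
  have mono: "F x < F y" if "xc-\<eta> \<le> x" "x < y" "y \<le> xc+\<eta>" for x y
    using ml[of x y] that mpos by (smt (verit) mult_pos_pos)
  have A: "\<bar>F x\<bar> \<le> \<delta> \<longleftrightarrow> lo \<le> x \<and> x \<le> hi" if "x \<in> {xc-\<eta>..xc+\<eta>}" for x
  proof
    assume "\<bar>F x\<bar> \<le> \<delta>"
    then show "lo \<le> x \<and> x \<le> hi" using mono[of x lo] mono[of hi x] that lo hi
      by (smt (verit) atLeastAtMost_iff)
  next
    assume "lo \<le> x \<and> x \<le> hi"
    then show "\<bar>F x\<bar> \<le> \<delta>" using mono[of x hi] mono[of lo x] that lo hi
      by (smt (verit) atLeastAtMost_iff)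
  qed
  have B: "\<bar>F x\<bar> < \<delta> \<longleftrightarrow> lo < x \<and> x < hi" if "x \<in> {xc-\<eta>..xc+\<eta>}" for x
  proof
    assume "\<bar>F x\<bar> < \<delta>"
    then show "lo < x \<and> x < hi" using mono[of x lo] mono[of hi x] that lo hi
      by (smt (verit) atLeastAtMost_iff)
  next
    assume "lo < x \<and> x < hi"
    then show "\<bar>F x\<bar> < \<delta>" using mono[of x hi] mono[of lo x] that lo hi
      by (smt (verit) atLeastAtMost_iff)
  qed
  show ?thesis using A B lo lo2 hi hi2 by blast
qed

definition cA :: "complex \<Rightarrow> complex \<Rightarrow> real" where
  "cA v0 z = Re z - Im z / Im v0 * Re v0"
definition cB :: "complex \<Rightarrow> complex \<Rightarrow> real" where
  "cB v0 z = Im z / Im v0"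

lemma decomp: "Im v0 \<noteq> 0 \<Longrightarrow> z = of_real (cA v0 z) + of_real (cB v0 z) * v0"
  by (simp add: cA_def cB_def complex_eq_iff field_simps)

lemma par_coords:
  assumes "Im v0 > 0"
  shows "cA v0 (par_pt (p - of_real \<epsilon> - of_real \<delta> * v0) (2*\<epsilon>) (of_real (2*\<delta>) * v0) a b - p) = 2*\<epsilon>*a - \<epsilon>"
    "cB v0 (par_pt (p - of_real \<epsilon> - of_real \<delta> * v0) (2*\<epsilon>) (of_real (2*\<delta>) * v0) a b - p) = 2*\<delta>*b - \<delta>"
  using assms unfolding par_pt_def cA_def cB_def
  by (auto simp: field_simps)

lemma par_pt_iff:
  assumes "Im v0 > 0" "\<epsilon> > 0" "\<delta> > 0"
  shows "z = par_pt (p - of_real \<epsilon> - of_real \<delta> * v0) (2*\<epsilon>) (of_real (2*\<delta>) * v0) a b \<longleftrightarrow>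
     a = (cA v0 (z - p) + \<epsilon>) / (2*\<epsilon>) \<and> b = (cB v0 (z - p) + \<delta>) / (2*\<delta>)"
proof
  assume "z = par_pt (p - of_real \<epsilon> - of_real \<delta> * v0) (2*\<epsilon>) (of_real (2*\<delta>) * v0) a b"
  then show "a = (cA v0 (z - p) + \<epsilon>) / (2*\<epsilon>) \<and> b = (cB v0 (z - p) + \<delta>) / (2*\<delta>)"
    using par_coords[OF assms(1)] assms by (auto simp: field_simps)
next
  assume ab: "a = (cA v0 (z - p) + \<epsilon>) / (2*\<epsilon>) \<and> b = (cB v0 (z - p) + \<delta>) / (2*\<delta>)"
  have "z - p = of_real (cA v0 (z - p)) + of_real (cB v0 (z - p)) * v0"
    using decomp assms by auto
  also have "cA v0 (z - p) = 2*\<epsilon>*a - \<epsilon>" using ab assms by (auto simp: field_simps)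
  also have "cB v0 (z - p) = 2*\<delta>*b - \<delta>" using ab assms by (auto simp: field_simps)
  finally show "z = par_pt (p - of_real \<epsilon> - of_real \<delta> * v0) (2*\<epsilon>) (of_real (2*\<delta>) * v0) a b"
    unfolding par_pt_def by (simp add: algebra_simps)
qed

lemma par_mem:
  assumes "Im v0 > 0" "\<epsilon> > 0" "\<delta> > 0"
  shows "z \<in> {par_pt (p - of_real \<epsilon> - of_real \<delta> * v0) (2*\<epsilon>) (of_real (2*\<delta>) * v0) a b | a b. P a b} \<longleftrightarrow>
     P ((cA v0 (z - p) + \<epsilon>) / (2*\<epsilon>)) ((cB v0 (z - p) + \<delta>) / (2*\<delta>))"
  using par_pt_iff[OF assms, of z p] by auto

lemma par_mem_b:
  assumes "Im v0 > 0" "\<epsilon> > 0" "\<delta> > 0"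
  shows "z \<in> {par_pt (p - of_real \<epsilon> - of_real \<delta> * v0) (2*\<epsilon>) (of_real (2*\<delta>) * v0) a 1 | a. P a} \<longleftrightarrow>
     P ((cA v0 (z - p) + \<epsilon>) / (2*\<epsilon>)) \<and> (cB v0 (z - p) + \<delta>) / (2*\<delta>) = 1"
     "z \<in> {par_pt (p - of_real \<epsilon> - of_real \<delta> * v0) (2*\<epsilon>) (of_real (2*\<delta>) * v0) a 0 | a. P a} \<longleftrightarrow>
     P ((cA v0 (z - p) + \<epsilon>) / (2*\<epsilon>)) \<and> (cB v0 (z - p) + \<delta>) / (2*\<delta>) = 0"
     "z \<in> {par_pt (p - of_real \<epsilon> - of_real \<delta> * v0) (2*\<epsilon>) (of_real (2*\<delta>) * v0) 1 b | b. P b} \<longleftrightarrow>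
     P ((cB v0 (z - p) + \<delta>) / (2*\<delta>)) \<and> (cA v0 (z - p) + \<epsilon>) / (2*\<epsilon>) = 1"
     "z \<in> {par_pt (p - of_real \<epsilon> - of_real \<delta> * v0) (2*\<epsilon>) (of_real (2*\<delta>) * v0) 0 b | b. P b} \<longleftrightarrow>
     P ((cB v0 (z - p) + \<delta>) / (2*\<delta>)) \<and> (cA v0 (z - p) + \<epsilon>) / (2*\<epsilon>) = 0"
  using par_pt_iff[OF assms, of z p] by auto

lemma par_sets:
  fixes p v0 z :: complex and \<epsilon> \<delta> :: real
  assumes "Im v0 > 0" "\<epsilon> > 0" "\<delta> > 0"
  shows "z \<in> par_closed (p - of_real \<epsilon> - of_real \<delta> * v0) (2*\<epsilon>) (of_real (2*\<delta>) * v0) \<longleftrightarrow> \<bar>cA v0 (z - p)\<bar> \<le> \<epsilon> \<and> \<bar>cB v0 (z - p)\<bar> \<le> \<delta>"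
    "z \<in> par_interior (p - of_real \<epsilon> - of_real \<delta> * v0) (2*\<epsilon>) (of_real (2*\<delta>) * v0) \<longleftrightarrow> \<bar>cA v0 (z - p)\<bar> < \<epsilon> \<and> \<bar>cB v0 (z - p)\<bar> < \<delta>"
    "z \<in> par_bottom (p - of_real \<epsilon> - of_real \<delta> * v0) (2*\<epsilon>) (of_real (2*\<delta>) * v0) \<longleftrightarrow> \<bar>cA v0 (z - p)\<bar> < \<epsilon> \<and> cB v0 (z - p) = -\<delta>"
    "z \<in> par_top (p - of_real \<epsilon> - of_real \<delta> * v0) (2*\<epsilon>) (of_real (2*\<delta>) * v0) \<longleftrightarrow> \<bar>cA v0 (z - p)\<bar> < \<epsilon> \<and> cB v0 (z - p) = \<delta>"
    "z \<in> par_left (p - of_real \<epsilon> - of_real \<delta> * v0) (2*\<epsilon>) (of_real (2*\<delta>) * v0) \<longleftrightarrow> cA v0 (z - p) = -\<epsilon> \<and> \<bar>cB v0 (z - p)\<bar> < \<delta>"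
    "z \<in> par_right (p - of_real \<epsilon> - of_real \<delta> * v0) (2*\<epsilon>) (of_real (2*\<delta>) * v0) \<longleftrightarrow> cA v0 (z - p) = \<epsilon> \<and> \<bar>cB v0 (z - p)\<bar> < \<delta>"
  unfolding par_closed_def par_interior_def par_bottom_def par_top_def par_left_def par_right_def
    par_mem[OF assms] par_mem_b[OF assms]
  using assms by (auto simp: field_simps abs_le_iff abs_less_iff)

lemma bl_cA: "bounded_linear (cA v0)"
proof -
  have 1: "bounded_linear (\<lambda>z. Im z / Im v0)"
    using bounded_linear_compose[OF bounded_linear_divide[where y="Im v0"] bounded_linear_Im] by simp
  have 2: "bounded_linear (\<lambda>z. Im z / Im v0 * Re v0)"
    using bounded_linear_compose[OF bounded_linear_mult_left[where y="Re v0"] 1] by simp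
  show ?thesis unfolding cA_def[abs_def] by (rule bounded_linear_sub[OF bounded_linear_Re 2])
qed

lemma bl_cB: "bounded_linear (cB v0)"
  unfolding cB_def[abs_def]
  using bounded_linear_compose[OF bounded_linear_divide[where y="Im v0"] bounded_linear_Im] by simp

lemma cAB_diff: "cA v0 (z - w) = cA v0 z - cA v0 w" "cB v0 (z - w) = cB v0 z - cB v0 w"
  "cA v0 0 = 0" "cB v0 0 = 0"
  by (auto simp: cA_def cB_def diff_divide_distrib algebra_simps)

lemma cAB_neg: "cA v0 (- z) = - cA v0 z" "cB v0 (- z) = - cB v0 z"
  by (auto simp: cA_def cB_def)

lemma cAB_bound0:
  assumes "Im v0 > 0"
  shows "\<bar>cA v0 z\<bar> \<le> (1 + cmod v0 / Im v0) * cmod z" "\<bar>cB v0 z\<bar> \<le> cmod z / Im v0"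
proof -
  have i: "\<bar>Im z\<bar> \<le> cmod z" "\<bar>Re z\<bar> \<le> cmod z" "\<bar>Re v0\<bar> \<le> cmod v0" by (auto simp: abs_Im_le_cmod abs_Re_le_cmod)
  have e: "\<bar>Im z / Im v0\<bar> = \<bar>Im z\<bar> / Im v0" using assms by (simp add: abs_divide)
  have b1: "\<bar>Im z / Im v0\<bar> \<le> cmod z / Im v0" unfolding e
    by (rule divide_right_mono[OF i(1)]) (use assms in linarith)
  then show "\<bar>cB v0 z\<bar> \<le> cmod z / Im v0" unfolding cB_def .
  have "\<bar>Im z / Im v0 * Re v0\<bar> \<le> cmod z / Im v0 * cmod v0"
    unfolding abs_mult by (rule mult_mono[OF b1 i(3)]) (use assms in auto)
  then have "\<bar>cA v0 z\<bar> \<le> cmod z + cmod z / Im v0 * cmod v0" unfolding cA_def using i by linarith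
  then show "\<bar>cA v0 z\<bar> \<le> (1 + cmod v0 / Im v0) * cmod z" by (simp add: algebra_simps)
qed

lemma cAB_bound:
  assumes "Im v0 > 0"
  shows "\<bar>cA v0 z\<bar> \<le> (1 + (1 + cmod v0) / Im v0) * cmod z" "\<bar>cB v0 z\<bar> \<le> (1 + (1 + cmod v0) / Im v0) * cmod z"
proof -
  have "(1 + cmod v0 / Im v0) * cmod z \<le> (1 + (1 + cmod v0) / Im v0) * cmod z"
    using assms by (intro mult_right_mono) (auto simp: divide_right_mono)
  then show "\<bar>cA v0 z\<bar> \<le> (1 + (1 + cmod v0) / Im v0) * cmod z" using cAB_bound0(1)[OF assms, of z] by linarith
  have "cmod z / Im v0 \<le> (1 + (1 + cmod v0) / Im v0) * cmod z"
  proof -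
    have "cmod z / Im v0 = (1 / Im v0) * cmod z" by simp
    also have "\<dots> \<le> (1 + (1 + cmod v0) / Im v0) * cmod z"
      using assms by (intro mult_right_mono) (auto simp: divide_right_mono add_increasing)
    finally show ?thesis .
  qed
  then show "\<bar>cB v0 z\<bar> \<le> (1 + (1 + cmod v0) / Im v0) * cmod z" using cAB_bound0(2)[OF assms, of z] by linarith
qed

lemma dcA:
  assumes "(\<gamma> has_vector_derivative d) (at x)"
  shows "((\<lambda>x. cA v0 (\<gamma> x - p)) has_real_derivative cA v0 d) (at x)"
proof -
  have "((\<lambda>x. \<gamma> x - p) has_vector_derivative d) (at x)"
    using assms by (auto intro!: derivative_eq_intros)
  from bounded_linear.has_vector_derivative[OF bl_cA this]
  show ?thesis by (simp add: has_real_derivative_iff_has_vector_derivative)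
qed

lemma dcB:
  assumes "(\<gamma> has_vector_derivative d) (at x)"
  shows "((\<lambda>x. cB v0 (\<gamma> x - p)) has_real_derivative cB v0 d) (at x)"
proof -
  have "((\<lambda>x. \<gamma> x - p) has_vector_derivative d) (at x)"
    using assms by (auto intro!: derivative_eq_intros)
  from bounded_linear.has_vector_derivative[OF bl_cB this]
  show ?thesis by (simp add: has_real_derivative_iff_has_vector_derivative)
qed

lemma abs_lower:
  fixes F F' :: "real \<Rightarrow> real"
  assumes dF: "\<And>x. x \<in> {x0-\<eta>..x0+\<eta>} \<Longrightarrow> (F has_real_derivative F' x) (at x)"
    and m: "\<And>x. x \<in> {x0-\<eta>..x0+\<eta>} \<Longrightarrow> F' x \<ge> m" and F0: "F x0 = 0"
    and x: "x \<in> {x0-\<eta>..x0+\<eta>}"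
  shows "\<bar>F x\<bar> \<ge> m * \<bar>x - x0\<bar>"
proof (cases "x \<le> x0")
  case True
  have "m*(x0 - x) \<le> F x0 - F x" by (rule mono_lower[OF dF m]) (use x True in auto)
  then show ?thesis using F0 True by auto
next
  case False
  have "m*(x - x0) \<le> F x - F x0" by (rule mono_lower[OF dF m]) (use x False in auto)
  then show ?thesis using F0 False by auto
qed

lemma inj_arc:
  fixes F F' :: "real \<Rightarrow> real"
  assumes dF: "\<And>x. x \<in> {a..b} \<Longrightarrow> (F has_real_derivative F' x) (at x)"
    and m: "\<And>x. x \<in> {a..b} \<Longrightarrow> F' x \<ge> m" and "m > 0"
    and x: "x \<in> {a..b}" "y \<in> {a..b}" "F x = F y"
  shows "x = y"
proof (rule ccontr)
  assume "x \<noteq> y"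
  then consider "x < y" | "y < x" by linarith
  then show False
  proof cases
    case 1
    have "m*(y - x) \<le> F y - F x" by (rule mono_lower[OF dF m]) (use x 1 in auto)
    moreover have "m*(y-x) > 0" using 1 \<open>m>0\<close> by simp
    ultimately show ?thesis using x by simp
  next
    case 2
    have "m*(x - y) \<le> F x - F y" by (rule mono_lower[OF dF m]) (use x 2 in auto)
    moreover have "m*(x-y) > 0" using 2 \<open>m>0\<close> by simp
    ultimately show ?thesis using x by simp
  qed
qed

lemma abs_upper:
  fixes G G' :: "real \<Rightarrow> real"
  assumes dG: "\<And>x. x \<in> {x0-\<eta>..x0+\<eta>} \<Longrightarrow> (G has_real_derivative G' x) (at x)"
    and k: "\<And>x. x \<in> {x0-\<eta>..x0+\<eta>} \<Longrightarrow> \<bar>G' x\<bar> \<le> k" and G0: "G x0 = 0"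
    and x: "x \<in> {x0-\<eta>..x0+\<eta>}"
  shows "\<bar>G x\<bar> \<le> k * \<bar>x - x0\<bar>"
proof (cases "x \<le> x0")
  case True
  have "\<bar>G x0 - G x\<bar> \<le> k*(x0 - x)" by (rule lip_bound[OF dG k]) (use x True in auto)
  then show ?thesis using G0 True by auto
next
  case False
  have "\<bar>G x - G x0\<bar> \<le> k*(x - x0)" by (rule lip_bound[OF dG k]) (use x False in auto)
  then show ?thesis using G0 False by auto
qed

lemma per_int:
  assumes per: "\<And>t. \<gamma> (t + 1) = \<gamma> t"
  shows "\<gamma> (x + of_int k) = \<gamma> x"
proof -
  have n: "\<gamma> (y + of_nat n) = \<gamma> y" for y n
  proof (induction n)
    case (Suc n)
    have "\<gamma> (y + of_nat (Suc n)) = \<gamma> ((y + of_nat n) + 1)" by (simp add: algebra_simps)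
    also have "\<dots> = \<gamma> (y + of_nat n)" by (rule per)
    finally show ?case using Suc by simp
  qed simp
  show ?thesis
  proof (cases "k \<ge> 0")
    case True
    then have "x + of_int k = x + of_nat (nat k)" by simp
    then show ?thesis using n[of x "nat k"] by metis
  next
    case False
    then have "x = (x + of_int k) + of_nat (nat (-k))" by simp
    then show ?thesis using n[of "x + of_int k" "nat (-k)"] by metis
  qed
qed

lemma cont_near:
  fixes g :: "real \<Rightarrow> complex"
  assumes "isCont g a" "e > 0"
  shows "\<exists>d>0. \<forall>x. \<bar>x - a\<bar> < d \<longrightarrow> cmod (g x - g a) < e"
proof -
  obtain d where d: "d > 0" "\<forall>x. x \<noteq> a \<and> norm (x - a) < d \<longrightarrow> norm (g x - g a) < e"
    using LIM_D[OF isContD[OF assms(1)] assms(2)] by blast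
  have "\<forall>x. \<bar>x - a\<bar> < d \<longrightarrow> cmod (g x - g a) < e"
  proof (intro allI impI)
    fix x assume "\<bar>x - a\<bar> < d"
    show "cmod (g x - g a) < e"
    proof (cases "x = a")
      case True then show ?thesis using assms(2) by simp
    next
      case False then show ?thesis using d \<open>\<bar>x - a\<bar> < d\<close> by auto
    qed
  qed
  then show ?thesis using d(1) by blast
qed

lemma int_strip: "0 < real_of_int k \<Longrightarrow> real_of_int k < 1 \<Longrightarrow> False"
proof -
  assume "0 < real_of_int k" "real_of_int k < 1"
  then have "0 < k" "k < 1" by simp_all
  then show False by simp
qed



lemma core:
  fixes \<gamma> \<gamma>' :: "real \<Rightarrow> complex" and p v0 :: complex and \<sigma> sv sh :: real
  assumes per: "\<And>t. \<gamma> (t + 1) = \<gamma> t"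
    and d\<gamma>: "\<And>t. (\<gamma> has_vector_derivative \<gamma>' t) (at t)"
    and c\<gamma>': "\<And>t. isCont \<gamma>' t"
    and ord: "sv < sh" "sh < sv + 1"
    and pts: "\<gamma> sv = p" "\<gamma> sh = p"
    and pre: "\<And>x. \<gamma> x = p \<Longrightarrow> \<exists>k::int. x = sv + of_int k \<or> x = sh + of_int k"
    and v0: "Im v0 > 0"
    and dv: "cA v0 (\<gamma>' sv) = 0" "cB v0 (\<gamma>' sv) = \<sigma>" "\<sigma> = 1 \<or> \<sigma> = -1"
    and dh: "cA v0 (\<gamma>' sh) \<noteq> 0"
  shows "\<exists>c w v. intersection_parallelogram \<gamma> p c w v"
proof -
  define fA where "fA = (\<lambda>x. cA v0 (\<gamma> x - p))"
  define fB where "fB = (\<lambda>x. cB v0 (\<gamma> x - p))"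
  define \<alpha> where "\<alpha> = cA v0 (\<gamma>' sh)"
  define \<beta> where "\<beta> = cB v0 (\<gamma>' sh)"
  define sa :: real where "sa = (if \<alpha> > 0 then 1 else -1)"
  define aa where "aa = \<bar>\<alpha>\<bar>"
  have aa: "aa > 0" "sa * \<alpha> = aa" "sa = 1 \<or> sa = -1" using dh by (auto simp: aa_def sa_def \<alpha>_def)
  define C where "C = 1 + (1 + cmod v0) / Im v0"
  have C: "C > 0" using v0 by (simp add: C_def add_pos_nonneg)
  have Cb: "\<bar>cA v0 z\<bar> \<le> C * cmod z" "\<bar>cB v0 z\<bar> \<le> C * cmod z" for z
    using cAB_bound[OF v0] unfolding C_def by auto
  define M where "M = \<bar>\<beta>\<bar> + 1"
  have M: "M \<ge> 1" by (simp add: M_def)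
  define \<kappa> where "\<kappa> = aa / (8 * M)"
  have \<kappa>: "\<kappa> > 0" using aa M by (simp add: \<kappa>_def)
  have \<kappa>M: "2 * \<kappa> * M = aa / 4" using M by (simp add: \<kappa>_def field_simps)
  have \<sigma>sq: "\<sigma> * \<sigma> = 1" using dv(3) by auto
  have sasq: "sa * sa = 1" using aa(3) by auto
  obtain e1 where e1: "e1 > 0" "\<And>x. \<bar>x - sv\<bar> < e1 \<Longrightarrow> cmod (\<gamma>' x - \<gamma>' sv) < min (1/2) \<kappa> / C"
    using cont_near[OF c\<gamma>', where e="min (1/2) \<kappa> / C"] C \<kappa> by auto
  obtain e2 where e2: "e2 > 0" "\<And>x. \<bar>x - sh\<bar> < e2 \<Longrightarrow> cmod (\<gamma>' x - \<gamma>' sh) < min (aa/2) 1 / C"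
    using cont_near[OF c\<gamma>', where e="min (aa/2) 1 / C"] C aa by auto
  have nearv: "\<sigma> * cB v0 (\<gamma>' x) \<ge> 1/2 \<and> \<bar>cA v0 (\<gamma>' x)\<bar> \<le> \<kappa>" if "\<bar>x - sv\<bar> < e1" for x
  proof -
    have n: "C * cmod (\<gamma>' x - \<gamma>' sv) \<le> min (1/2) \<kappa>"
      using e1(2)[OF that] C by (simp add: pos_less_divide_eq mult.commute less_imp_le)
    have h: "\<bar>cB v0 (\<gamma>' x) - \<sigma>\<bar> \<le> 1/2"
      using Cb(2)[of "\<gamma>' x - \<gamma>' sv"] n dv(2) cAB_diff(2)[of v0 "\<gamma>' x" "\<gamma>' sv"] by linarith
    have "cB v0 (\<gamma>' x) - \<sigma> \<le> 1/2" "\<sigma> - cB v0 (\<gamma>' x) \<le> 1/2" using abs_le_D1[OF h] abs_le_D2[OF h] by auto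
    then have "\<sigma> * cB v0 (\<gamma>' x) \<ge> 1/2" using dv(3) by (elim disjE) auto
    moreover have "\<bar>cA v0 (\<gamma>' x)\<bar> \<le> \<kappa>"
      using Cb(1)[of "\<gamma>' x - \<gamma>' sv"] n dv(1) cAB_diff(1)[of v0 "\<gamma>' x" "\<gamma>' sv"] by linarith
    ultimately show ?thesis by blast
  qed
  have nearh: "sa * cA v0 (\<gamma>' x) \<ge> aa/2 \<and> \<bar>cB v0 (\<gamma>' x)\<bar> \<le> M" if "\<bar>x - sh\<bar> < e2" for x
  proof -
    have n: "C * cmod (\<gamma>' x - \<gamma>' sh) \<le> min (aa/2) 1"
      using e2(2)[OF that] C by (simp add: pos_less_divide_eq mult.commute less_imp_le)
    have h: "\<bar>cA v0 (\<gamma>' x) - \<alpha>\<bar> \<le> aa/2"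
      using Cb(1)[of "\<gamma>' x - \<gamma>' sh"] n \<alpha>_def cAB_diff(1)[of v0 "\<gamma>' x" "\<gamma>' sh"] by linarith
    have "cA v0 (\<gamma>' x) - \<alpha> \<le> aa/2" "\<alpha> - cA v0 (\<gamma>' x) \<le> aa/2" using abs_le_D1[OF h] abs_le_D2[OF h] by auto
    then have "sa * cA v0 (\<gamma>' x) \<ge> aa/2" unfolding sa_def aa_def
      by (cases "\<alpha> > 0") auto
    moreover have "\<bar>cB v0 (\<gamma>' x)\<bar> \<le> M"
      using Cb(2)[of "\<gamma>' x - \<gamma>' sh"] n \<beta>_def cAB_diff(2)[of v0 "\<gamma>' x" "\<gamma>' sh"] M_def by linarith
    ultimately show ?thesis by blast
  qed
  define \<eta> where "\<eta> = min (min (e1/2) (e2/2)) (min ((sh - sv)/3) ((sv + 1 - sh)/3))"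
  have \<eta>4: "\<eta> \<le> (sh - sv)/3" unfolding \<eta>_def by (rule min.coboundedI2[OF min.cobounded1])
  have \<eta>5: "\<eta> \<le> (sv + 1 - sh)/3" unfolding \<eta>_def by (rule min.coboundedI2[OF min.cobounded2])
  have \<eta>: "\<eta> > 0" "\<eta> < e1" "\<eta> < e2" "\<eta> \<le> (sh - sv)/3" "\<eta> \<le> (sv + 1 - sh)/3"
    using e1 e2 ord \<eta>4 \<eta>5 unfolding \<eta>_def by auto
  define Iv where "Iv = {sv - \<eta> .. sv + \<eta>}"
  define Ih where "Ih = {sh - \<eta> .. sh + \<eta>}"
  have Fv_d: "((\<lambda>x. \<sigma> * fB x) has_real_derivative \<sigma> * cB v0 (\<gamma>' x)) (at x)" for x
    unfolding fB_def by (intro DERIV_cmult dcB d\<gamma>)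
  have Gv_d: "(fA has_real_derivative cA v0 (\<gamma>' x)) (at x)" for x
    unfolding fA_def by (intro dcA d\<gamma>)
  have Fh_d: "((\<lambda>x. sa * fA x) has_real_derivative sa * cA v0 (\<gamma>' x)) (at x)" for x
    unfolding fA_def by (intro DERIV_cmult dcA d\<gamma>)
  have Gh_d: "(fB has_real_derivative cB v0 (\<gamma>' x)) (at x)" for x
    unfolding fB_def by (intro dcB d\<gamma>)
  have inIv: "\<bar>x - sv\<bar> < e1" if "x \<in> Iv" for x using that \<eta> unfolding Iv_def by auto
  have inIh: "\<bar>x - sh\<bar> < e2" if "x \<in> Ih" for x using that \<eta> unfolding Ih_def by auto
  have fA0: "fA sv = 0" "fA sh = 0" "fB sv = 0" "fB sh = 0"
    using pts by (auto simp: fA_def fB_def cAB_diff)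
  have lowv: "\<bar>\<sigma> * fB x\<bar> \<ge> 1/2 * \<bar>x - sv\<bar>" if "x \<in> Iv" for x
    by (rule abs_lower[where F'="\<lambda>x. \<sigma> * cB v0 (\<gamma>' x)"]) 
       (use Fv_d nearv inIv fA0 that in \<open>auto simp: Iv_def\<close>)
  have upv: "\<bar>fA x\<bar> \<le> \<kappa> * \<bar>x - sv\<bar>" if "x \<in> Iv" for x
    by (rule abs_upper[where G'="\<lambda>x. cA v0 (\<gamma>' x)"]) 
       (use Gv_d nearv inIv fA0 that in \<open>auto simp: Iv_def\<close>)
  have lowh: "\<bar>sa * fA x\<bar> \<ge> aa/2 * \<bar>x - sh\<bar>" if "x \<in> Ih" for x
    by (rule abs_lower[where F'="\<lambda>x. sa * cA v0 (\<gamma>' x)"]) 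
       (use Fh_d nearh inIh fA0 that in \<open>auto simp: Ih_def\<close>)
  have uph: "\<bar>fB x\<bar> \<le> M * \<bar>x - sh\<bar>" if "x \<in> Ih" for x
    by (rule abs_upper[where G'="\<lambda>x. cB v0 (\<gamma>' x)"]) 
       (use Gh_d nearh inIh fA0 that in \<open>auto simp: Ih_def\<close>)
  have absv: "\<bar>\<sigma> * fB x\<bar> = \<bar>fB x\<bar>" for x using dv(3) by auto
  have absh: "\<bar>sa * fA x\<bar> = \<bar>fA x\<bar>" for x using aa(3) by auto
  have cont\<gamma>: "continuous_on S \<gamma>" for S
    using d\<gamma> by (meson continuous_at_imp_continuous_on has_vector_derivative_continuous)
  define K where "K = {sv + \<eta> .. sh - \<eta>} \<union> {sh + \<eta> .. sv + 1 - \<eta>}"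
  have Knp: "\<gamma> x \<noteq> p" if "x \<in> K" for x
  proof
    assume "\<gamma> x = p"
    then obtain k :: int where k: "x = sv + of_int k \<or> x = sh + of_int k" using pre by blast
    show False
    proof (cases "x = sv + of_int k")
      case True
      then have "0 < real_of_int k" "real_of_int k < 1" using that \<eta> ord unfolding K_def by auto
      then show False using int_strip by blast
    next
      case False
      then have x: "x = sh + of_int k" using k by auto
      show False
      proof (cases "x \<le> sh - \<eta>")
        case True
        then have "0 < real_of_int (-k)" "real_of_int (-k) < 1" using that x \<eta> ord unfolding K_def by auto
        then show False using int_strip by blast
      next
        case False
        then have "0 < real_of_int k" "real_of_int k < 1" using that x \<eta> ord unfolding K_def by auto
        then show False using int_strip by blast
      qed
    qed
  qed
  have "compact (\<gamma> ` K)" unfolding K_def by (intro compact_continuous_image cont\<gamma> compact_Un compact_Icc)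
  then have "open (- (\<gamma> ` K))" by (simp add: compact_imp_closed open_Compl)
  moreover have "p \<in> - (\<gamma> ` K)" using Knp by auto
  ultimately obtain r where r: "r > 0" "ball p r \<subseteq> - (\<gamma> ` K)"
    using open_contains_ball by blast
  have farK: "cmod (\<gamma> x - p) \<ge> r" if "x \<in> K" for x
  proof (rule ccontr)
    assume "\<not> r \<le> cmod (\<gamma> x - p)"
    then have "\<gamma> x \<in> ball p r" by (simp add: dist_norm norm_minus_commute)
    then show False using r that by auto
  qed
  define \<delta> where "\<delta> = min (\<eta>/2) (r / (2 * (3 * \<kappa> + cmod v0 + 1)))"
  define \<epsilon> where "\<epsilon> = 3 * \<kappa> * \<delta>"
  have den: "2 * (3 * \<kappa> + cmod v0 + 1) > 0" using \<kappa> by (simp add: add_pos_nonneg)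
  have \<delta>1: "\<delta> \<le> \<eta>/2" unfolding \<delta>_def by (rule min.cobounded1)
  have \<delta>2: "\<delta> \<le> r / (2 * (3 * \<kappa> + cmod v0 + 1))" unfolding \<delta>_def by (rule min.cobounded2)
  have \<delta>: "\<delta> > 0" unfolding \<delta>_def using \<eta> r den by simp
  have \<epsilon>: "\<epsilon> > 0" unfolding \<epsilon>_def using \<delta> \<kappa> by simp
  have small: "\<epsilon> + \<delta> * cmod v0 < r"
  proof -
    have "\<delta> * (2 * (3 * \<kappa> + cmod v0 + 1)) \<le> r" using \<delta>2 den by (simp add: pos_le_divide_eq)
    moreover have "\<delta> * \<kappa> \<ge> 0" "\<delta> * cmod v0 \<ge> 0" using \<delta> \<kappa> by auto
    moreover have "\<delta> * (2 * (3 * \<kappa> + cmod v0 + 1)) = 2*\<delta> + 6*(\<delta>*\<kappa>) + 2*(\<delta>*cmod v0)"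
      by (simp add: algebra_simps)
    moreover have "\<epsilon> + \<delta> * cmod v0 = 3*(\<delta>*\<kappa>) + \<delta>*cmod v0" unfolding \<epsilon>_def by (simp add: algebra_simps)
    ultimately show ?thesis using \<delta> by linarith
  qed
  have \<epsilon>\<eta>: "\<epsilon> \<le> aa/2 * \<eta>"
  proof -
    have "\<epsilon> = 3 * aa * \<delta> / (8 * M)" unfolding \<epsilon>_def \<kappa>_def by simp
    also have "\<dots> \<le> 3 * aa * \<delta> / 8" using M aa \<delta> by (intro divide_left_mono) auto
    also have "\<dots> \<le> aa/2 * \<eta>" using \<delta>1 \<delta> aa(1) by (simp add: field_simps)
    finally show ?thesis .
  qed
  have \<epsilon>\<delta>: "M * (\<epsilon> / (aa/2)) < \<delta>"
  proof -
    have "M * (\<epsilon> / (aa/2)) = 3/4 * \<delta>" unfolding \<epsilon>_def \<kappa>_def using aa M by (simp add: field_simps)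
    then show ?thesis using \<delta> by simp
  qed
  have \<kappa>\<delta>: "\<kappa> * (2 * \<delta>) < \<epsilon>" unfolding \<epsilon>_def using \<kappa> \<delta> by simp
  obtain lo1 hi1 where arcv: "sv-\<eta> \<le> lo1" "lo1 < sv" "sv < hi1" "hi1 \<le> sv+\<eta>"
     "\<sigma> * fB lo1 = -\<delta>" "\<sigma> * fB hi1 = \<delta>"
     "\<And>x. x\<in>Iv \<Longrightarrow> \<bar>\<sigma> * fB x\<bar> \<le> \<delta> \<longleftrightarrow> lo1 \<le> x \<and> x \<le> hi1"
     "\<And>x. x\<in>Iv \<Longrightarrow> \<bar>\<sigma> * fB x\<bar> < \<delta> \<longleftrightarrow> lo1 < x \<and> x < hi1"
    using arc1d[where F="\<lambda>x. \<sigma> * fB x" and F'="\<lambda>x. \<sigma> * cB v0 (\<gamma>' x)" and xc=sv and \<eta>=\<eta> and m="1/2" and \<delta>=\<delta>]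
      Fv_d nearv inIv fA0 \<delta> \<delta>1 unfolding Iv_def by auto
  obtain lo2 hi2 where arch: "sh-\<eta> \<le> lo2" "lo2 < sh" "sh < hi2" "hi2 \<le> sh+\<eta>"
     "sa * fA lo2 = -\<epsilon>" "sa * fA hi2 = \<epsilon>"
     "\<And>x. x\<in>Ih \<Longrightarrow> \<bar>sa * fA x\<bar> \<le> \<epsilon> \<longleftrightarrow> lo2 \<le> x \<and> x \<le> hi2"
     "\<And>x. x\<in>Ih \<Longrightarrow> \<bar>sa * fA x\<bar> < \<epsilon> \<longleftrightarrow> lo2 < x \<and> x < hi2"
    using arc1d[where F="\<lambda>x. sa * fA x" and F'="\<lambda>x. sa * cA v0 (\<gamma>' x)" and xc=sh and \<eta>=\<eta> and m="aa/2" and \<delta>=\<epsilon>]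
      Fh_d nearh inIh fA0 \<epsilon> \<epsilon>\<eta> aa unfolding Ih_def by auto
  define c where "c = p - of_real \<epsilon> - of_real \<delta> * v0"
  define v where "v = of_real (2*\<delta>) * v0"
  have PS: "z \<in> par_closed c (2*\<epsilon>) v \<longleftrightarrow> \<bar>cA v0 (z - p)\<bar> \<le> \<epsilon> \<and> \<bar>cB v0 (z - p)\<bar> \<le> \<delta>"
    "z \<in> par_interior c (2*\<epsilon>) v \<longleftrightarrow> \<bar>cA v0 (z - p)\<bar> < \<epsilon> \<and> \<bar>cB v0 (z - p)\<bar> < \<delta>"
    "z \<in> par_bottom c (2*\<epsilon>) v \<longleftrightarrow> \<bar>cA v0 (z - p)\<bar> < \<epsilon> \<and> cB v0 (z - p) = -\<delta>"
    "z \<in> par_top c (2*\<epsilon>) v \<longleftrightarrow> \<bar>cA v0 (z - p)\<bar> < \<epsilon> \<and> cB v0 (z - p) = \<delta>"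
    "z \<in> par_left c (2*\<epsilon>) v \<longleftrightarrow> cA v0 (z - p) = -\<epsilon> \<and> \<bar>cB v0 (z - p)\<bar> < \<delta>"
    "z \<in> par_right c (2*\<epsilon>) v \<longleftrightarrow> cA v0 (z - p) = \<epsilon> \<and> \<bar>cB v0 (z - p)\<bar> < \<delta>" for z
    unfolding c_def v_def using par_sets[OF v0 \<epsilon> \<delta>] by blast+
  have inC: "\<gamma> x \<in> par_closed c (2*\<epsilon>) v \<longleftrightarrow> \<bar>fA x\<bar> \<le> \<epsilon> \<and> \<bar>fB x\<bar> \<le> \<delta>" for x
    unfolding fA_def fB_def by (rule PS(1))
  have V1: "\<bar>fA x\<bar> < \<epsilon>" if "x \<in> Iv" "\<bar>fB x\<bar> \<le> \<delta>" for x
  proof -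
    have "\<bar>x - sv\<bar> \<le> 2 * \<delta>" using lowv[OF that(1)] absv[of x] that(2) by auto
    then have "\<kappa> * \<bar>x - sv\<bar> \<le> \<kappa> * (2 * \<delta>)" using \<kappa> by (intro mult_left_mono) auto
    then show ?thesis using upv[OF that(1)] \<kappa>\<delta> by linarith
  qed
  have H1: "\<bar>fB x\<bar> < \<delta>" if "x \<in> Ih" "\<bar>fA x\<bar> \<le> \<epsilon>" for x
  proof -
    have "aa/2 * \<bar>x - sh\<bar> \<le> \<epsilon>" using lowh[OF that(1)] absh[of x] that(2) by auto
    then have "\<bar>x - sh\<bar> \<le> \<epsilon> / (aa/2)" using aa by (simp add: pos_le_divide_eq mult.commute)
    then have "M * \<bar>x - sh\<bar> \<le> M * (\<epsilon> / (aa/2))" using M by (intro mult_left_mono) auto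
    then show ?thesis using uph[OF that(1)] \<epsilon>\<delta> by linarith
  qed
  have arcV: "x \<in> Iv \<and> \<bar>fB x\<bar> \<le> \<delta> \<and> \<bar>fA x\<bar> < \<epsilon>" if "lo1 \<le> x" "x \<le> hi1" for x
  proof -
    have x: "x \<in> Iv" using that arcv unfolding Iv_def by auto
    then have "\<bar>fB x\<bar> \<le> \<delta>" using arcv(7)[OF x] that absv by auto
    then show ?thesis using V1 x by auto
  qed
  have arcVo: "\<bar>fB x\<bar> < \<delta> \<and> \<bar>fA x\<bar> < \<epsilon>" if "lo1 < x" "x < hi1" for x
  proof -
    have x: "x \<in> Iv" using that arcv unfolding Iv_def by auto
    then have "\<bar>fB x\<bar> < \<delta>" using arcv(8)[OF x] that absv by auto
    then show ?thesis using V1 x by auto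
  qed
  have arcH: "x \<in> Ih \<and> \<bar>fA x\<bar> \<le> \<epsilon> \<and> \<bar>fB x\<bar> < \<delta>" if "lo2 \<le> x" "x \<le> hi2" for x
  proof -
    have x: "x \<in> Ih" using that arch unfolding Ih_def by auto
    then have "\<bar>fA x\<bar> \<le> \<epsilon>" using arch(7)[OF x] that absh by auto
    then show ?thesis using H1 x by auto
  qed
  have arcHo: "\<bar>fA x\<bar> < \<epsilon> \<and> \<bar>fB x\<bar> < \<delta>" if "lo2 < x" "x < hi2" for x
  proof -
    have x: "x \<in> Ih" using that arch unfolding Ih_def by auto
    then have "\<bar>fA x\<bar> < \<epsilon>" using arch(8)[OF x] that absh by auto
    then show ?thesis using H1 x by auto
  qed
  have ordr: "lo1 < hi1" "hi1 < lo2" "lo2 < hi2" "hi2 < lo1 + 1"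
    using arcv arch \<eta> by auto
  have preim: "{t. \<gamma> t \<in> par_closed c (2*\<epsilon>) v} =
     (\<Union>k::int. {lo1 + of_int k .. hi1 + of_int k} \<union> {lo2 + of_int k .. hi2 + of_int k})"
  proof (intro equalityI subsetI)
    fix t assume "t \<in> {t. \<gamma> t \<in> par_closed c (2*\<epsilon>) v}"
    then have t: "\<bar>fA t\<bar> \<le> \<epsilon>" "\<bar>fB t\<bar> \<le> \<delta>" using inC by auto
    define k where "k = \<lfloor>t - (sv - \<eta>)\<rfloor>"
    define y where "y = t - of_int k"
    have y: "sv - \<eta> \<le> y" "y < sv - \<eta> + 1" unfolding y_def k_def
      using floor_le_iff[of "t - (sv - \<eta>)"] real_of_int_floor_add_one_gt[of "t - (sv - \<eta>)"]
            of_int_floor_le[of "t - (sv - \<eta>)"] by linarith+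
    have ty: "t = y + of_int k" unfolding y_def by simp
    have gy: "\<gamma> y = \<gamma> t" using per_int[where \<gamma>=\<gamma>, OF per, of y k] ty by simp
    have yA: "\<bar>fA y\<bar> \<le> \<epsilon>" "\<bar>fB y\<bar> \<le> \<delta>" using t gy unfolding fA_def fB_def by auto
    have "y \<in> {lo1..hi1} \<union> {lo2..hi2}"
    proof (cases "y \<le> sv + \<eta>")
      case True
      then have yI: "y \<in> Iv" using y unfolding Iv_def by auto
      then show ?thesis using arcv(7)[OF yI] yA absv by auto
    next
      case False
      show ?thesis
      proof (cases "sh - \<eta> \<le> y \<and> y \<le> sh + \<eta>")
        case True
        then have yI: "y \<in> Ih" unfolding Ih_def by auto
        then show ?thesis using arch(7)[OF yI] yA absh by auto
      next
        case False2: False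
        have "y \<in> K" using False False2 y unfolding K_def by auto
        then have "cmod (\<gamma> y - p) \<ge> r" by (rule farK)
        moreover have "cmod (\<gamma> y - p) \<le> \<epsilon> + \<delta> * cmod v0"
        proof -
          have "\<gamma> y - p = of_real (fA y) + of_real (fB y) * v0"
            unfolding fA_def fB_def using decomp v0 by auto
          then have "cmod (\<gamma> y - p) \<le> \<bar>fA y\<bar> + \<bar>fB y\<bar> * cmod v0"
            by (metis norm_mult norm_of_real norm_triangle_ineq)
          also have "\<dots> \<le> \<epsilon> + \<delta> * cmod v0" using yA by (intro add_mono mult_right_mono) auto
          finally show ?thesis .
        qed
        ultimately show ?thesis using small by linarith
      qed
    qed
    then show "t \<in> (\<Union>k::int. {lo1 + of_int k .. hi1 + of_int k} \<union> {lo2 + of_int k .. hi2 + of_int k})"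
      using ty by (intro UN_I[of k]) auto
  next
    fix t assume "t \<in> (\<Union>k::int. {lo1 + of_int k .. hi1 + of_int k} \<union> {lo2 + of_int k .. hi2 + of_int k})"
    then obtain k :: int where k: "t \<in> {lo1 + of_int k .. hi1 + of_int k} \<union> {lo2 + of_int k .. hi2 + of_int k}" by blast
    define y where "y = t - of_int k"
    have gy: "\<gamma> y = \<gamma> t" using per_int[where \<gamma>=\<gamma>, OF per, of y k] unfolding y_def by simp
    have "y \<in> {lo1..hi1} \<union> {lo2..hi2}" using k unfolding y_def by auto
    then have "\<bar>fA y\<bar> \<le> \<epsilon> \<and> \<bar>fB y\<bar> \<le> \<delta>" using arcV arcH by fastforce
    then show "t \<in> {t. \<gamma> t \<in> par_closed c (2*\<epsilon>) v}" using inC gy unfolding fA_def fB_def by auto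
  qed
  have inarc: "\<exists>k::int. \<exists>y. x = y + of_int k \<and> ((lo1 \<le> y \<and> y \<le> hi1) \<or> (lo2 \<le> y \<and> y \<le> hi2))"
    if "\<gamma> x \<in> par_closed c (2*\<epsilon>) v" for x
  proof -
    have "x \<in> (\<Union>k::int. {lo1 + of_int k .. hi1 + of_int k} \<union> {lo2 + of_int k .. hi2 + of_int k})"
      using preim that by blast
    then obtain k :: int where "x \<in> {lo1 + of_int k .. hi1 + of_int k} \<union> {lo2 + of_int k .. hi2 + of_int k}" by blast
    then show ?thesis by (intro exI[of _ k] exI[of _ "x - of_int k"]) auto
  qed
  have cross: "\<gamma> b = p" if "lo1 \<le> a" "a \<le> hi1" "lo2 \<le> b" "b \<le> hi2" "\<gamma> a = \<gamma> b" for a b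
  proof -
    have a: "a \<in> Iv" using arcV that by auto
    have b: "b \<in> Ih" using arcH that by auto
    have eA: "fA a = fA b" and eB: "fB a = fB b" using that(5) unfolding fA_def fB_def by auto
    have "1/2 * \<bar>a - sv\<bar> \<le> M * \<bar>b - sh\<bar>" using lowv[OF a] absv[of a] uph[OF b] eB by auto
    then have "\<bar>a - sv\<bar> \<le> 2 * M * \<bar>b - sh\<bar>" by auto
    then have "\<kappa> * \<bar>a - sv\<bar> \<le> \<kappa> * (2 * M * \<bar>b - sh\<bar>)" using \<kappa> by (intro mult_left_mono) auto
    also have "\<dots> = aa/4 * \<bar>b - sh\<bar>" using \<kappa>M by (simp add: algebra_simps)
    finally have "\<kappa> * \<bar>a - sv\<bar> \<le> aa/4 * \<bar>b - sh\<bar>" .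
    moreover have "aa/2 * \<bar>b - sh\<bar> \<le> \<kappa> * \<bar>a - sv\<bar>" using lowh[OF b] absh[of b] upv[OF a] eA by auto
    ultimately have "aa/4 * \<bar>b - sh\<bar> \<le> 0" by linarith
    then have "\<bar>b - sh\<bar> \<le> 0" using aa(1) by (simp add: mult_le_0_iff)
    then have "b = sh" by auto
    then show ?thesis using pts by simp
  qed
  have injV: "a = a'" if "lo1 \<le> a" "a \<le> hi1" "lo1 \<le> a'" "a' \<le> hi1" "\<gamma> a = \<gamma> a'" for a a'
  proof -
    have "a \<in> Iv" "a' \<in> Iv" using arcV that by auto
    moreover have "\<sigma> * fB a = \<sigma> * fB a'" using that(5) unfolding fB_def by simp
    ultimately show ?thesis
      using inj_arc[where F="\<lambda>x. \<sigma> * fB x" and F'="\<lambda>x. \<sigma> * cB v0 (\<gamma>' x)" and m="1/2" and a="sv-\<eta>" and b="sv+\<eta>"]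
        Fv_d nearv inIv unfolding Iv_def by auto
  qed
  have injH: "a = a'" if "lo2 \<le> a" "a \<le> hi2" "lo2 \<le> a'" "a' \<le> hi2" "\<gamma> a = \<gamma> a'" for a a'
  proof -
    have "a \<in> Ih" "a' \<in> Ih" using arcH that by auto
    moreover have "sa * fA a = sa * fA a'" using that(5) unfolding fA_def by simp
    ultimately show ?thesis
      using inj_arc[where F="\<lambda>x. sa * fA x" and F'="\<lambda>x. sa * cA v0 (\<gamma>' x)" and m="aa/2" and a="sh-\<eta>" and b="sh+\<eta>"]
        Fh_d nearh inIh aa unfolding Ih_def by auto
  qed
  have unit: "x = y" if h: "0 \<le> x" "x < 1" "0 \<le> y" "y < 1" "x - y = of_int m" for x y :: real and m :: int
  proof (rule ccontr)
    assume "x \<noteq> y"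
    then consider "0 < real_of_int m" | "0 < real_of_int (-m)" using h(5) by fastforce
    then show False
    proof cases
      case 1 then show ?thesis using int_strip[of m] h by auto
    next
      case 2 then show ?thesis using int_strip[of "-m"] h by auto
    qed
  qed
  have pC: "p \<in> par_closed c (2*\<epsilon>) v" using PS(1)[of p] \<epsilon> \<delta> by (simp add: cAB_diff)
  have dbl: "{q \<in> par_closed c (2*\<epsilon>) v. is_double_point \<gamma> q} = {p}"
  proof (intro equalityI subsetI)
    fix q assume "q \<in> {q \<in> par_closed c (2*\<epsilon>) v. is_double_point \<gamma> q}"
    then obtain x y where q: "q \<in> par_closed c (2*\<epsilon>) v" "0 \<le> x" "x < 1" "0 \<le> y" "y < 1" "x \<noteq> y"
      "\<gamma> x = q" "\<gamma> y = q" unfolding is_double_point_def by blast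
    have "\<gamma> x \<in> par_closed c (2*\<epsilon>) v" "\<gamma> y \<in> par_closed c (2*\<epsilon>) v" using q by auto
    note ix = inarc[OF this(1)] and iy = inarc[OF this(2)]
    obtain k x' where x': "x = x' + of_int k" "(lo1 \<le> x' \<and> x' \<le> hi1) \<or> (lo2 \<le> x' \<and> x' \<le> hi2)"
      using ix by blast
    obtain l y' where y': "y = y' + of_int l" "(lo1 \<le> y' \<and> y' \<le> hi1) \<or> (lo2 \<le> y' \<and> y' \<le> hi2)"
      using iy by blast
    have gx: "\<gamma> x' = q" using per_int[where \<gamma>=\<gamma>, OF per, of x' k] x' q by simp
    have gy: "\<gamma> y' = q" using per_int[where \<gamma>=\<gamma>, OF per, of y' l] y' q by simp
    have diff: "x - y = of_int (k - l)" if "x' = y'" using x' y' that by simp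
    have "q = p"
    proof -
      consider "lo1 \<le> x' \<and> x' \<le> hi1" "lo1 \<le> y' \<and> y' \<le> hi1"
        | "lo2 \<le> x' \<and> x' \<le> hi2" "lo2 \<le> y' \<and> y' \<le> hi2"
        | "lo1 \<le> x' \<and> x' \<le> hi1" "lo2 \<le> y' \<and> y' \<le> hi2"
        | "lo2 \<le> x' \<and> x' \<le> hi2" "lo1 \<le> y' \<and> y' \<le> hi1"
        using x'(2) y'(2) by blast
      then show ?thesis
      proof cases
        case 1
        then have "x' = y'" using injV gx gy by auto
        then show ?thesis using unit[OF q(2-5) diff] q(6) by auto
      next
        case 2
        then have "x' = y'" using injH gx gy by auto
        then show ?thesis using unit[OF q(2-5) diff] q(6) by auto
      next
        case 3
        then show ?thesis using cross[of x' y'] gx gy by auto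
      next
        case 4
        then show ?thesis using cross[of y' x'] gx gy by auto
      qed
    qed
    then show "q \<in> {p}" by simp
  next
    fix q assume "q \<in> {p}"
    then have qp: "q = p" by simp
    define s0 where "s0 = sv - of_int \<lfloor>sv\<rfloor>"
    define t0 where "t0 = sh - of_int \<lfloor>sh\<rfloor>"
    have s0: "0 \<le> s0" "s0 < 1" unfolding s0_def by linarith+
    have t0: "0 \<le> t0" "t0 < 1" unfolding t0_def by linarith+
    have gs: "\<gamma> s0 = p" using per_int[where \<gamma>=\<gamma>, OF per, of s0 "\<lfloor>sv\<rfloor>"] pts unfolding s0_def by simp
    have gt: "\<gamma> t0 = p" using per_int[where \<gamma>=\<gamma>, OF per, of t0 "\<lfloor>sh\<rfloor>"] pts unfolding t0_def by simp
    have "s0 \<noteq> t0"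
    proof
      assume "s0 = t0"
      then have "real_of_int (\<lfloor>sh\<rfloor> - \<lfloor>sv\<rfloor>) = sh - sv" unfolding s0_def t0_def by simp
      then show False using int_strip[of "\<lfloor>sh\<rfloor> - \<lfloor>sv\<rfloor>"] ord by linarith
    qed
    then have "is_double_point \<gamma> p" unfolding is_double_point_def using s0 t0 gs gt by blast
    then show "q \<in> {q \<in> par_closed c (2*\<epsilon>) v. is_double_point \<gamma> q}" using pC qp by simp
  qed
  have imV: "\<gamma> ` {lo1<..<hi1} \<subseteq> par_interior c (2*\<epsilon>) v"
    using arcVo PS(2) unfolding fA_def fB_def by auto
  have imH: "\<gamma> ` {lo2<..<hi2} \<subseteq> par_interior c (2*\<epsilon>) v"
    using arcHo PS(2) unfolding fA_def fB_def by auto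
  have endV: "(\<gamma> lo1 \<in> par_bottom c (2*\<epsilon>) v \<and> \<gamma> hi1 \<in> par_top c (2*\<epsilon>) v) \<or>
         (\<gamma> lo1 \<in> par_top c (2*\<epsilon>) v \<and> \<gamma> hi1 \<in> par_bottom c (2*\<epsilon>) v)"
  proof -
    have a: "\<bar>fA lo1\<bar> < \<epsilon>" "\<bar>fA hi1\<bar> < \<epsilon>" using arcV[of lo1] arcV[of hi1] ordr by auto
    show ?thesis using dv(3)
    proof
      assume "\<sigma> = 1"
      then have "fB lo1 = -\<delta>" "fB hi1 = \<delta>" using arcv(5,6) by auto
      then show ?thesis using a PS(3,4) unfolding fA_def fB_def by auto
    next
      assume "\<sigma> = -1"
      then have "fB lo1 = \<delta>" "fB hi1 = -\<delta>" using arcv(5,6) by auto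
      then show ?thesis using a PS(3,4) unfolding fA_def fB_def by auto
    qed
  qed
  have endH: "(\<gamma> lo2 \<in> par_left c (2*\<epsilon>) v \<and> \<gamma> hi2 \<in> par_right c (2*\<epsilon>) v) \<or>
         (\<gamma> lo2 \<in> par_right c (2*\<epsilon>) v \<and> \<gamma> hi2 \<in> par_left c (2*\<epsilon>) v)"
  proof -
    have a: "\<bar>fB lo2\<bar> < \<delta>" "\<bar>fB hi2\<bar> < \<delta>" using arcH[of lo2] arcH[of hi2] ordr by auto
    show ?thesis using aa(3)
    proof
      assume "sa = 1"
      then have "fA lo2 = -\<epsilon>" "fA hi2 = \<epsilon>" using arch(5,6) by auto
      then show ?thesis using a PS(5,6) unfolding fA_def fB_def by auto
    next
      assume "sa = -1"
      then have "fA lo2 = \<epsilon>" "fA hi2 = -\<epsilon>" using arch(5,6) by auto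
      then show ?thesis using a PS(5,6) unfolding fA_def fB_def by auto
    qed
  qed
  have wv: "2*\<epsilon> > 0" "Im v > 0" using \<epsilon> \<delta> v0 unfolding v_def by auto
  have "intersection_parallelogram \<gamma> p c (2*\<epsilon>) v"
    unfolding intersection_parallelogram_def
    using wv dbl ordr preim imV imH endV endH by blast
  then show ?thesis by blast
qed


lemma reduce:
  fixes \<gamma> \<gamma>' :: "real \<Rightarrow> complex" and p :: complex and a b :: real
  assumes per: "\<And>t. \<gamma> (t + 1) = \<gamma> t"
    and d\<gamma>: "\<And>t. (\<gamma> has_vector_derivative \<gamma>' t) (at t)"
    and c\<gamma>': "\<And>t. isCont \<gamma>' t"
    and ab: "0 \<le> a" "a < 1" "0 \<le> b" "b < 1" "a \<noteq> b"
    and pts: "\<gamma> a = p" "\<gamma> b = p"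
    and pre: "\<And>x. \<gamma> x = p \<Longrightarrow> \<exists>k::int. x = a + of_int k \<or> x = b + of_int k"
    and Ia: "Im (\<gamma>' a) \<noteq> 0"
    and tr: "Im (cnj (\<gamma>' a) * \<gamma>' b) \<noteq> 0"
  shows "\<exists>c w v. intersection_parallelogram \<gamma> p c w v"
proof -
  define sh where "sh = (if a < b then b else b + 1)"
  have ord: "a < sh" "sh < a + 1" unfolding sh_def using ab by auto
  have gsh: "\<gamma> sh = p" unfolding sh_def using per[of b] pts by auto
  have pre': "\<exists>k::int. x = a + of_int k \<or> x = sh + of_int k" if hx: "\<gamma> x = p" for x
  proof -
    obtain k :: int where k: "x = a + of_int k \<or> x = b + of_int k" using pre[OF hx] by blast
    show ?thesis
    proof (cases "a < b")
      case True then show ?thesis using k unfolding sh_def by auto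
    next
      case False
      then have "x = a + of_int k \<or> x = sh + of_int (k - 1)" using k unfolding sh_def by auto
      then show ?thesis by blast
    qed
  qed
  define da where "da = \<gamma>' a"
  define db where "db = \<gamma>' b"
  have dbsh: "\<gamma>' sh = db"
  proof (cases "a < b")
    case True then show ?thesis unfolding sh_def db_def by simp
  next
    case False
    have h1: "((\<lambda>t. t + 1) has_vector_derivative 1) (at b)"
      using has_real_derivative_iff_has_vector_derivative[THEN iffD1, OF DERIV_add[OF DERIV_ident DERIV_const[of 1]]]
      by simp
    have "((\<lambda>t. \<gamma> (t + 1)) has_vector_derivative \<gamma>' (b + 1)) (at b)"
      using vector_diff_chain_at[OF h1, of \<gamma> "\<gamma>' (b+1)"] d\<gamma>[of "b+1"] by (simp add: o_def)
    then have "(\<gamma> has_vector_derivative \<gamma>' (b + 1)) (at b)" using per by simp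
    then have "\<gamma>' (b+1) = \<gamma>' b" using d\<gamma>[of b] vector_derivative_unique_at by blast
    then show ?thesis using False unfolding sh_def db_def by simp
  qed
  define v0 where "v0 = (if Im da > 0 then da else - da)"
  define \<sigma> :: real where "\<sigma> = (if Im da > 0 then 1 else -1)"
  have v0: "Im v0 > 0" using Ia unfolding v0_def da_def by auto
  have v0da: "v0 = of_real \<sigma> * da" unfolding v0_def \<sigma>_def by auto
  have dv: "cA v0 da = 0" "cB v0 da = \<sigma>"
    using Ia unfolding v0_def \<sigma>_def cA_def cB_def da_def by (auto simp: field_simps)
  have dh: "cA v0 db \<noteq> 0"
  proof
    assume h: "cA v0 db = 0"
    have "db = of_real (cA v0 db) + of_real (cB v0 db) * v0" using decomp v0 by auto
    also have "\<dots> = of_real (cB v0 db * \<sigma>) * da" using h v0da by simp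
    finally have e: "db = of_real (cB v0 db * \<sigma>) * da" .
    have "Im (cnj da * db) = 0" by (subst e) (simp add: algebra_simps)
    then show False using tr unfolding da_def db_def by simp
  qed
  show ?thesis
    using core[OF per d\<gamma> c\<gamma>' ord pts(1) gsh pre' v0, of \<sigma>] dv dh dbsh
    unfolding da_def \<sigma>_def by auto
qed



theorem mainTheorem2:
  fixes \<gamma> :: "real \<Rightarrow> complex" and p :: complex
  assumes "knot_diagram \<gamma>"
    and "is_double_point \<gamma> p"
  shows "\<exists>c w v. intersection_parallelogram \<gamma> p c w v"
proof -
  have per: "\<And>t. \<gamma> (t + 1) = \<gamma> t" and sm: "smooth_curve \<gamma>"
    and tr: "\<And>s t. 0 \<le> s \<Longrightarrow> s < 1 \<Longrightarrow> 0 \<le> t \<Longrightarrow> t < 1 \<Longrightarrow> s \<noteq> t \<Longrightarrow> \<gamma> s = \<gamma> t \<Longrightarrow>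
        Im (cnj (vector_derivative \<gamma> (at s)) * vector_derivative \<gamma> (at t)) \<noteq> 0"
    and tri: "\<And>r s t. 0 \<le> r \<Longrightarrow> r < 1 \<Longrightarrow> 0 \<le> s \<Longrightarrow> s < 1 \<Longrightarrow> 0 \<le> t \<Longrightarrow> t < 1 \<Longrightarrow>
        r \<noteq> s \<Longrightarrow> r \<noteq> t \<Longrightarrow> s \<noteq> t \<Longrightarrow> \<not> (\<gamma> r = \<gamma> s \<and> \<gamma> s = \<gamma> t)"
    using assms(1) unfolding knot_diagram_def by blast+
  obtain f :: "nat \<Rightarrow> real \<Rightarrow> complex" where f: "f 0 = \<gamma>" "\<And>k t. (f k has_vector_derivative f (Suc k) t) (at t)"
    using sm unfolding smooth_curve_def by blast
  have d\<gamma>: "(\<gamma> has_vector_derivative f 1 t) (at t)" for t using f(2)[of 0 t] f(1) by simp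
  have vd: "vector_derivative \<gamma> (at t) = f 1 t" for t using vector_derivative_at[OF d\<gamma>] .
  have c1: "isCont (f 1) t" for t using has_vector_derivative_continuous[OF f(2)[of 1 t]] .
  obtain s t where st: "0 \<le> s" "s < 1" "0 \<le> t" "t < 1" "s \<noteq> t" "\<gamma> s = p" "\<gamma> t = p"
    using assms(2) unfolding is_double_point_def by blast
  have pre: "\<exists>k::int. x = s + of_int k \<or> x = t + of_int k" if hx: "\<gamma> x = p" for x
  proof -
    define x0 where "x0 = x - of_int \<lfloor>x\<rfloor>"
    have x0: "0 \<le> x0" "x0 < 1" unfolding x0_def by linarith+
    have "\<gamma> x0 = p" using per_int[where \<gamma>=\<gamma>, OF per, of x0 "\<lfloor>x\<rfloor>"] hx unfolding x0_def by simp
    then have "x0 = s \<or> x0 = t" using tri[of x0 s t] x0 st by auto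
    then show ?thesis unfolding x0_def by (intro exI[of _ "\<lfloor>x\<rfloor>"]) auto
  qed
  have T: "Im (cnj (f 1 s) * f 1 t) \<noteq> 0" using tr[of s t] st vd by simp
  show ?thesis
  proof (cases "Im (f 1 s) = 0")
    case False
    show ?thesis
      by (rule reduce[OF per d\<gamma> c1 st(1-7) pre False T])
  next
    case True
    have e: "Im (cnj (f 1 s) * f 1 t) = Re (f 1 s) * Im (f 1 t)" using True by simp
    have I2: "Im (f 1 t) \<noteq> 0" using T e by auto
    have T2: "Im (cnj (f 1 t) * f 1 s) \<noteq> 0" using T True by (simp add: e)
    have pre2: "\<exists>k::int. x = t + of_int k \<or> x = s + of_int k" if "\<gamma> x = p" for x
      using pre[OF that] by blast
    show ?thesis
      using reduce[OF per d\<gamma> c1 st(3,4,1,2) _ st(7,6) pre2 I2 T2] st(5) by auto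
  qed
qed

end
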